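(* Suppose $G$ consists of a single strongly connected component and at least one vertex of $G$ has out-degree greater than one. Then the flow $\psi$ on $\Delta$ is chaotic.
   Context: $G$ is a finite directed graph (loops allowed) with vertex set $V$. $\Omega$ is the set of bi-infinite paths in $G$, i.e. sequences $(x_i)_{i\in\mathbb Z}\in V^{\mathbb Z}$ such that for every $i$ there is an edge from $x_i$ to $x_{i+1}$. Fix $h>0$. $\bar\Delta$ is the set of functions $x:\mathbb R\to V$ that are constant on each interval $[nh,(n+1)h)$, $n\in\mathbb Z$, and satisfy $(x(ih))_{i\in\mathbb Z}\in\Omega$. $\Delta=\{x(\cdot+t): x\in\bar\Delta,\ t\in\mathbb R\}$, with metric $d(x,y)=\sum_{i\in\mathbb Z}4^{-|i|}\frac1h\int_{ih}^{(i+1)h}\delta(x,y,t)\,dt$, where $\delta(x,y,t)=1$ if $x(t)\ne y(t)$ and $0$ otherwise. The flow $\psi:\mathbb R\times\Delta\to\Delta$ is $\psi(t,x)=x(\cdot+t)$. "$G$ consists of a single strongly connected component" means that for all $u,v\in V$ (including $u=v$) there is a directed path of positive length from $u$ to $v$. A flow on a metric space $X$ is chaotic if (i) it has sensitive dependence on initial conditions (there is $\delta>0$ such that for every $x\in X$ and every neighborhood $B$ of $x$ there are $y\in B$, $t>0$ with $d(\Phi_t(x),\Phi_t(y))>\delta$), (ii) its periodic points are dense in $X$, and (iii) it is topologically transitive (there is $x\in X$ with $\omega(x)=X$, where $\omega(x)$ is the set of limits of $\Phi_{t_k}(x)$ along sequences $t_k\to+\infty$). *)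

theory Defs
  imports "HOL-Analysis.Analysis"
begin

definition strongly_connected :: "('v \<Rightarrow> 'v \<Rightarrow> bool) \<Rightarrow> bool" where
  "strongly_connected E \<longleftrightarrow> (\<forall>u v. (u, v) \<in> {(a, b). E a b}\<^sup>+)"

definition out_degree :: "('v \<Rightarrow> 'v \<Rightarrow> bool) \<Rightarrow> 'v \<Rightarrow> nat" where
  "out_degree E v = card {w. E v w}"

definition Omega :: "('v \<Rightarrow> 'v \<Rightarrow> bool) \<Rightarrow> (int \<Rightarrow> 'v) set" where
  "Omega E = {s. \<forall>i. E (s i) (s (i + 1))}"

definition Delta_bar :: "('v \<Rightarrow> 'v \<Rightarrow> bool) \<Rightarrow> real \<Rightarrow> (real \<Rightarrow> 'v) set" where
  "Delta_bar E h = {x. (\<forall>n::int. \<forall>t. real_of_int n * h \<le> t \<and> t < real_of_int (n + 1) * h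
                        \<longrightarrow> x t = x (real_of_int n * h))
                   \<and> (\<lambda>i::int. x (real_of_int i * h)) \<in> Omega E}"

definition Delta :: "('v \<Rightarrow> 'v \<Rightarrow> bool) \<Rightarrow> real \<Rightarrow> (real \<Rightarrow> 'v) set" where
  "Delta E h = {(\<lambda>s. x (s + t)) | x t. x \<in> Delta_bar E h}"

definition delta_ind :: "(real \<Rightarrow> 'v) \<Rightarrow> (real \<Rightarrow> 'v) \<Rightarrow> real \<Rightarrow> real" where
  "delta_ind x y t = (if x t \<noteq> y t then 1 else 0)"

definition dist_Delta :: "real \<Rightarrow> (real \<Rightarrow> 'v) \<Rightarrow> (real \<Rightarrow> 'v) \<Rightarrow> real" where
  "dist_Delta h x y = (\<Sum>\<^sub>\<infinity>i\<in>(UNIV::int set).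
      (1/4) ^ nat \<bar>i\<bar> * ((1 / h) * integral {real_of_int i * h .. real_of_int (i + 1) * h} (delta_ind x y)))"

definition psi :: "real \<Rightarrow> (real \<Rightarrow> 'v) \<Rightarrow> (real \<Rightarrow> 'v)" where
  "psi t x = (\<lambda>s. x (s + t))"

definition sensitive_dependence ::
  "'a set \<Rightarrow> ('a \<Rightarrow> 'a \<Rightarrow> real) \<Rightarrow> (real \<Rightarrow> 'a \<Rightarrow> 'a) \<Rightarrow> bool" where
  "sensitive_dependence X d Phi \<longleftrightarrow>
     (\<exists>\<delta>>0. \<forall>x\<in>X. \<forall>B. (\<exists>e>0. {z\<in>X. d x z < e} \<subseteq> B) \<longrightarrow>
        (\<exists>y\<in>B \<inter> X. \<exists>t>0. d (Phi t x) (Phi t y) > \<delta>))"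

definition periodic_point :: "'a set \<Rightarrow> (real \<Rightarrow> 'a \<Rightarrow> 'a) \<Rightarrow> 'a \<Rightarrow> bool" where
  "periodic_point X Phi x \<longleftrightarrow> x \<in> X \<and> (\<exists>T>0. Phi T x = x)"

definition periodic_dense ::
  "'a set \<Rightarrow> ('a \<Rightarrow> 'a \<Rightarrow> real) \<Rightarrow> (real \<Rightarrow> 'a \<Rightarrow> 'a) \<Rightarrow> bool" where
  "periodic_dense X d Phi \<longleftrightarrow>
     (\<forall>x\<in>X. \<forall>e>0. \<exists>p. periodic_point X Phi p \<and> d x p < e)"

definition omega_limit ::
  "'a set \<Rightarrow> ('a \<Rightarrow> 'a \<Rightarrow> real) \<Rightarrow> (real \<Rightarrow> 'a \<Rightarrow> 'a) \<Rightarrow> 'a \<Rightarrow> 'a set" where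
  "omega_limit X d Phi x = {y\<in>X. \<exists>tk::nat \<Rightarrow> real. filterlim tk at_top sequentially \<and>
       (\<lambda>k. d (Phi (tk k) x) y) \<longlonglongrightarrow> 0}"

definition topologically_transitive ::
  "'a set \<Rightarrow> ('a \<Rightarrow> 'a \<Rightarrow> real) \<Rightarrow> (real \<Rightarrow> 'a \<Rightarrow> 'a) \<Rightarrow> bool" where
  "topologically_transitive X d Phi \<longleftrightarrow> (\<exists>x\<in>X. omega_limit X d Phi x = X)"

definition chaotic_flow ::
  "'a set \<Rightarrow> ('a \<Rightarrow> 'a \<Rightarrow> real) \<Rightarrow> (real \<Rightarrow> 'a \<Rightarrow> 'a) \<Rightarrow> bool" where
  "chaotic_flow X d Phi \<longleftrightarrow>
     sensitive_dependence X d Phi \<and> periodic_dense X d Phi \<and> topologically_transitive X d Phi"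

end

theory Submission
  imports Defs
begin


lemma summable_cmp:
  fixes f g :: "'a \<Rightarrow> real"
  assumes g: "g summable_on UNIV" and f0: "\<And>x. 0 \<le> f x" and fg: "\<And>x. f x \<le> g x"
  shows "f summable_on UNIV"
proof (rule nonneg_bdd_above_summable_on)
  show "bdd_above (sum f ` {F. F \<subseteq> UNIV \<and> finite F})"
  proof (rule bdd_aboveI2)
    fix F :: "'a set" assume F: "F \<in> {F. F \<subseteq> UNIV \<and> finite F}"
    have "sum f F \<le> sum g F" using fg by (intro sum_mono) auto
    also have "\<dots> = infsum g F" using F by simp
    also have "\<dots> \<le> infsum g UNIV"
      using F g f0 fg by (intro infsum_mono_neutral) (auto intro: order_trans)
    finally show "sum f F \<le> infsum g UNIV" .
  qed
qed (use f0 in auto)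

lemma geo_int_summable: "(\<lambda>i::int. (1/2::real) ^ nat \<bar>i\<bar>) summable_on UNIV"
proof -
  let ?g = "\<lambda>i::int. (1/2::real) ^ nat \<bar>i\<bar>"
  have U: "(UNIV::int set) = range int \<union> range (\<lambda>n. - int n - 1)"
  proof -
    have "i \<in> range int \<union> range (\<lambda>n. - int n - 1)" for i :: int
    proof (cases "i \<ge> 0")
      case True then show ?thesis by (metis UnI1 nonneg_int_cases rangeI)
    next
      case False then have "i = - int (nat (- i - 1)) - 1" by simp
      then show ?thesis by blast
    qed
    then show ?thesis by blast
  qed
  have i1: "inj_on int UNIV" by (simp add: inj_on_def)
  have i2: "inj_on (\<lambda>n::nat. - int n - 1) UNIV" by (simp add: inj_on_def)
  have e1: "?g \<circ> int = (\<lambda>n. (1/2::real) ^ n)" by (rule ext) simp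
  have e2: "?g \<circ> (\<lambda>n::nat. - int n - 1) = (\<lambda>n. (1/2) * (1/2::real) ^ n)"
  proof (rule ext)
    fix n :: nat
    have "nat \<bar>- int n - 1\<bar> = Suc n" by simp
    then show "(?g \<circ> (\<lambda>n::nat. - int n - 1)) n = (1/2) * (1/2::real) ^ n" by simp
  qed
  have s1: "?g summable_on range int"
    unfolding summable_on_reindex[OF i1] e1
    by (rule summable_nonneg_imp_summable_on) (simp_all add: summable_geometric)
  have s2: "?g summable_on range (\<lambda>n. - int n - 1)"
    unfolding summable_on_reindex[OF i2] e2
    by (rule summable_nonneg_imp_summable_on) (simp_all add: summable_geometric summable_mult)
  have "?g summable_on (range int \<union> range (\<lambda>n. - int n - 1))"
    by (rule summable_on_Un_disjoint[OF s1 s2]) auto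
  then show ?thesis using U by simp
qed

lemma integral_01_bound:
  assumes "a \<le> b" and "\<And>t. 0 \<le> f t" and "\<And>t. f t \<le> (1::real)"
  shows "0 \<le> integral {a..b} f \<and> integral {a..b} f \<le> b - a"
proof (cases "f integrable_on {a..b}")
  case True
  have "integral {a..b} f \<le> integral {a..b} (\<lambda>_. 1::real)"
    using True assms by (intro integral_le) auto
  then show ?thesis using True assms by (auto intro: integral_nonneg)
next
  case False then show ?thesis using assms by (simp add: not_integrable_integral)
qed

definition dterm :: "real \<Rightarrow> (real \<Rightarrow> 'v) \<Rightarrow> (real \<Rightarrow> 'v) \<Rightarrow> int \<Rightarrow> real" where
  "dterm h x y i = (1/4) ^ nat \<bar>i\<bar> * ((1 / h) * integral {real_of_int i * h .. real_of_int (i + 1) * h} (delta_ind x y))"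

lemma dist_Delta_dterm: "dist_Delta h x y = infsum (dterm h x y) UNIV"
  unfolding dist_Delta_def dterm_def by simp

lemma dterm_bounds:
  assumes h: "h > 0"
  shows "0 \<le> dterm h x y i \<and> dterm h x y i \<le> (1/4) ^ nat \<bar>i\<bar>"
proof -
  have le: "real_of_int i * h \<le> real_of_int (i + 1) * h" using h by (simp add: distrib_right)
  have "0 \<le> integral {real_of_int i * h .. real_of_int (i + 1) * h} (delta_ind x y) \<and>
        integral {real_of_int i * h .. real_of_int (i + 1) * h} (delta_ind x y) \<le> h"
    using integral_01_bound[OF le, of "delta_ind x y"] by (auto simp: delta_ind_def distrib_right)
  then have q: "0 \<le> (1/h) * integral {real_of_int i * h .. real_of_int (i + 1) * h} (delta_ind x y)"
     "(1/h) * integral {real_of_int i * h .. real_of_int (i + 1) * h} (delta_ind x y) \<le> 1"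
    using h by (auto simp: field_simps)
  have p: "0 \<le> (1/4::real) ^ nat \<bar>i\<bar>" by simp
  show ?thesis unfolding dterm_def using mult_nonneg_nonneg[OF p q(1)] mult_left_le[OF q(2) p] by blast
qed

lemma geo4_summable: "(\<lambda>i::int. (1/4::real) ^ nat \<bar>i\<bar>) summable_on UNIV"
  by (rule summable_cmp[OF geo_int_summable]) (simp_all add: power_mono)

lemma dterm_summable: "h > 0 \<Longrightarrow> dterm h x y summable_on UNIV"
  by (rule summable_cmp[OF geo4_summable]) (use dterm_bounds in auto)

lemma dist_nonneg: "h > 0 \<Longrightarrow> 0 \<le> dist_Delta h x y"
  unfolding dist_Delta_dterm by (rule infsum_nonneg) (use dterm_bounds in auto)

definition CC :: real where "CC = infsum (\<lambda>i::int. (1/2::real) ^ nat \<bar>i\<bar>) UNIV"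

lemma dist_close:
  assumes h: "h > 0" and agree: "\<And>s. - real N * h \<le> s \<Longrightarrow> s \<le> (real N + 1) * h \<Longrightarrow> x s = y s"
  shows "dist_Delta h x y \<le> CC * (1/2) ^ N"
proof -
  have b: "dterm h x y i \<le> (1/2) ^ N * (1/2) ^ nat \<bar>i\<bar>" for i
  proof (cases "\<bar>i\<bar> \<le> int N")
    case True
    have "integral {real_of_int i * h .. real_of_int (i + 1) * h} (delta_ind x y)
        = integral {real_of_int i * h .. real_of_int (i + 1) * h} (\<lambda>_. 0::real)"
    proof (rule integral_cong)
      fix t assume t: "t \<in> {real_of_int i * h .. real_of_int (i + 1) * h}"
      have "- real N * h \<le> real_of_int i * h" using True h
        by (intro mult_right_mono) auto
      moreover have "real_of_int (i + 1) * h \<le> (real N + 1) * h" using True h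
        by (intro mult_right_mono) auto
      ultimately show "delta_ind x y t = 0" using t agree unfolding delta_ind_def by auto
    qed
    then have "dterm h x y i = 0" unfolding dterm_def by simp
    then show ?thesis by simp
  next
    case False
    then have Nle: "N \<le> nat \<bar>i\<bar>" by simp
    have "dterm h x y i \<le> (1/4) ^ nat \<bar>i\<bar>" using dterm_bounds[OF h] by blast
    also have "\<dots> = (1/2) ^ nat \<bar>i\<bar> * (1/2) ^ nat \<bar>i\<bar>"
      by (simp add: power_mult_distrib[symmetric])
    also have "\<dots> \<le> (1/2) ^ N * (1/2) ^ nat \<bar>i\<bar>"
      by (intro mult_right_mono power_decreasing Nle) auto
    finally show ?thesis .
  qed
  have "dist_Delta h x y \<le> infsum (\<lambda>i. (1/2) ^ N * (1/2::real) ^ nat \<bar>i\<bar>) UNIV"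
    unfolding dist_Delta_dterm
    by (intro infsum_mono dterm_summable h summable_on_cmult_right geo_int_summable b)
  also have "\<dots> = (1/2) ^ N * CC" unfolding CC_def
    by (intro infsum_cmult_right geo_int_summable)
  finally show ?thesis by (simp add: mult.commute)
qed

lemma dist_far:
  assumes h: "h > 0" and diff: "\<And>s. 0 \<le> s \<Longrightarrow> s < h \<Longrightarrow> x s \<noteq> y s"
  shows "1 \<le> dist_Delta h x y"
proof -
  have "integral {0..h} (delta_ind x y) = integral {0..h} (\<lambda>_. 1::real)"
    by (rule integral_spike[of "{h}"]) (auto simp: delta_ind_def diff)
  then have "dterm h x y 0 = 1" unfolding dterm_def using h by simp
  moreover have "dterm h x y 0 \<le> infsum (dterm h x y) UNIV"
  proof -
    have "infsum (dterm h x y) {0} \<le> infsum (dterm h x y) UNIV"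
      by (intro infsum_mono_neutral dterm_summable h) (use dterm_bounds[OF h] in auto)
    then show ?thesis by simp
  qed
  ultimately show ?thesis unfolding dist_Delta_dterm by simp
qed




lemma glue:
  assumes "successively E (xs @ [v])" "successively E (v # ys)"
  shows "successively E (xs @ v # ys)"
  using assms by (auto simp: successively_append_iff)

lemma glue2:
  assumes "successively E xs" "xs \<noteq> []" "successively E (last xs # ys)"
  shows "successively E (xs @ ys)"
  using assms by (cases ys) (auto simp: successively_append_iff successively_Cons)

locale G =
  fixes E :: "'v::finite \<Rightarrow> 'v \<Rightarrow> bool" and h :: real
  assumes sc: "strongly_connected E" and hpos: "h > 0"
begin

definition mk :: "(int \<Rightarrow> 'v) \<Rightarrow> real \<Rightarrow> real \<Rightarrow> 'v" where
  "mk \<sigma> t = (\<lambda>s. \<sigma> \<lfloor>(s + t) / h\<rfloor>)"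

lemma floor_shift: "\<lfloor>(s + real_of_int D * h) / h\<rfloor> = \<lfloor>s / h\<rfloor> + D"
proof -
  have "(s + real_of_int D * h) / h = s / h + real_of_int D" using hpos by (simp add: field_simps)
  then show ?thesis by simp
qed

lemma mk_shift: "mk \<sigma> (t + real_of_int D * h) = mk (\<lambda>i. \<sigma> (i + D)) t"
  unfolding mk_def
proof (rule ext)
  fix s
  have "\<lfloor>(s + (t + real_of_int D * h)) / h\<rfloor> = \<lfloor>(s + t) / h\<rfloor> + D"
    using floor_shift[of "s + t" D] by (simp add: add.assoc)
  then show "\<sigma> \<lfloor>(s + (t + real_of_int D * h)) / h\<rfloor> = \<sigma> (\<lfloor>(s + t) / h\<rfloor> + D)" by simp
qed

lemma psi_mk: "psi r (mk \<sigma> t) = mk \<sigma> (t + r)"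
  unfolding psi_def mk_def by (simp add: add_ac)

lemma floor_block: assumes "0 \<le> s" "s < h" shows "\<lfloor>(s + real_of_int k * h) / h\<rfloor> = k"
proof -
  have "0 \<le> s / h" using assms hpos by simp
  moreover have "s / h < 1" using assms hpos by simp
  ultimately have "\<lfloor>s / h\<rfloor> = 0" by (simp add: floor_eq_iff)
  then show ?thesis using floor_shift[of s k] by simp
qed

lemma mk_in_Delta:
  assumes "\<sigma> \<in> Omega E" shows "mk \<sigma> t \<in> Delta E h"
proof -
  let ?xb = "\<lambda>r. \<sigma> \<lfloor>r / h\<rfloor>"
  have "?xb \<in> Delta_bar E h"
    unfolding Delta_bar_def
  proof (intro CollectI conjI allI impI)
    fix n :: int and t assume "real_of_int n * h \<le> t \<and> t < real_of_int (n + 1) * h"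
    then have "\<lfloor>t / h\<rfloor> = n" using hpos by (simp add: floor_eq_iff field_simps)
    then show "?xb t = ?xb (real_of_int n * h)" using hpos by simp
  next
    show "(\<lambda>i::int. ?xb (real_of_int i * h)) \<in> Omega E" using assms hpos by simp
  qed
  then have ex: "\<exists>x t'. mk \<sigma> t = (\<lambda>s. x (s + t')) \<and> x \<in> Delta_bar E h"
    by (intro exI[of _ ?xb] exI[of _ t] conjI) (simp_all add: mk_def)
  show ?thesis unfolding Delta_def using ex by blast
qed

lemma Delta_mk:
  assumes "x \<in> Delta E h" shows "\<exists>\<sigma>\<in>Omega E. \<exists>t. x = mk \<sigma> t"
proof -
  obtain xb t where x: "x = (\<lambda>s. xb (s + t))" and xb: "xb \<in> Delta_bar E h"
    using assms unfolding Delta_def by blast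
  let ?\<sigma> = "\<lambda>i::int. xb (real_of_int i * h)"
  have om: "?\<sigma> \<in> Omega E" using xb unfolding Delta_bar_def by blast
  have eq: "xb r = ?\<sigma> \<lfloor>r / h\<rfloor>" for r
  proof -
    have "real_of_int \<lfloor>r / h\<rfloor> * h \<le> r" using floor_divide_lower[OF hpos] .
    moreover have "r < real_of_int (\<lfloor>r / h\<rfloor> + 1) * h" using floor_divide_upper[OF hpos, of r] by simp
    ultimately show ?thesis using xb unfolding Delta_bar_def by blast
  qed
  have "x = mk ?\<sigma> t" unfolding x mk_def by (rule ext) (rule eq)
  then show ?thesis using om by blast
qed

lemma Omega_shift: "\<sigma> \<in> Omega E \<Longrightarrow> (\<lambda>i. \<sigma> (i + D)) \<in> Omega E"
  unfolding Omega_def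
proof (intro CollectI allI)
  fix i assume "\<sigma> \<in> {s. \<forall>i. E (s i) (s (i + 1))}"
  then have "E (\<sigma> (i + D)) (\<sigma> (i + D + 1))" by blast
  then show "E (\<sigma> (i + D)) (\<sigma> (i + 1 + D))" by (simp add: add_ac)
qed

lemma small_N: "e > 0 \<Longrightarrow> \<exists>N. CC * (1/2) ^ N < e"
proof -
  assume e: "e > 0"
  have "(\<lambda>N. CC * (1/2::real) ^ N) \<longlonglongrightarrow> CC * 0"
    by (intro tendsto_mult tendsto_const LIMSEQ_power_zero) simp
  then have "eventually (\<lambda>N. CC * (1/2::real) ^ N < e) sequentially"
    using e by (auto dest: order_tendstoD(2))
  then show ?thesis by (auto simp: eventually_sequentially)
qed

lemma window_agree:
  assumes ag: "\<And>i. \<lfloor>t / h\<rfloor> - int N \<le> i \<Longrightarrow> i \<le> \<lfloor>t / h\<rfloor> + int N + 1 \<Longrightarrow> \<sigma> i = \<sigma>' i"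
  shows "dist_Delta h (mk \<sigma> t) (mk \<sigma>' t) \<le> CC * (1/2) ^ N"
proof (rule dist_close[OF hpos])
  fix s assume s1: "- real N * h \<le> s" and s2: "s \<le> (real N + 1) * h"
  have a: "- real N \<le> s / h" using s1 hpos by (simp add: field_simps)
  have b: "s / h \<le> real N + 1" using s2 hpos by (simp add: field_simps)
  have eq: "(s + t) / h = s / h + t / h" by (simp add: add_divide_distrib)
  have "\<lfloor>- real N + t / h\<rfloor> \<le> \<lfloor>(s + t) / h\<rfloor>" unfolding eq using a by (intro floor_mono) simp
  moreover have "\<lfloor>(s + t) / h\<rfloor> \<le> \<lfloor>real N + 1 + t / h\<rfloor>" unfolding eq using b by (intro floor_mono) simp
  moreover have "\<lfloor>- real N + t / h\<rfloor> = \<lfloor>t / h\<rfloor> - int N"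
    using floor_add_int[of "t/h" "- int N"] by (simp add: add.commute)
  moreover have "\<lfloor>real N + 1 + t / h\<rfloor> = \<lfloor>t / h\<rfloor> + int N + 1"
    using floor_add_int[of "t/h" "int N + 1"] by (simp add: add_ac)
  ultimately show "mk \<sigma> t s = mk \<sigma>' t s" unfolding mk_def using ag by simp
qed

lemma trancl_list:
  assumes "(u, v) \<in> {(a, b). E a b}\<^sup>+" shows "\<exists>c. successively E (u # c @ [v])"
  using assms
proof (induction rule: trancl_induct)
  case (base y) then show ?case by (intro exI[of _ "[]"]) simp
next
  case (step y z)
  then obtain c where c: "successively E (u # c @ [y])" by blast
  have "successively E ((u # c @ [y]) @ [z])"
    using c step by (subst successively_append_iff) auto
  then show ?case by (intro exI[of _ "c @ [y]"]) simp
qed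

definition conn :: "'v \<Rightarrow> 'v \<Rightarrow> 'v list" where
  "conn u v = (SOME c. successively E (u # c @ [v]))"

lemma conn: "successively E (u # conn u v @ [v])"
proof -
  have "(u, v) \<in> {(a, b). E a b}\<^sup>+" using sc unfolding strongly_connected_def by blast
  then show ?thesis unfolding conn_def by (rule someI_ex[OF trancl_list])
qed

definition succ :: "'v \<Rightarrow> 'v" where "succ u = (SOME w. E u w)"
definition pred :: "'v \<Rightarrow> 'v" where "pred u = (SOME w. E w u)"

lemma succ: "E u (succ u)"
proof -
  have T: "(u, u) \<in> {(a, b). E a b}\<^sup>+" using sc unfolding strongly_connected_def by blast
  obtain z where "(u, z) \<in> {(a, b). E a b}" using tranclD[OF T] by blast
  then have "E u z" by simp
  then show ?thesis unfolding succ_def by (rule someI[of "\<lambda>w. E u w"])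
qed

lemma pred: "E (pred u) u"
proof -
  have T: "(u, u) \<in> {(a, b). E a b}\<^sup>+" using sc unfolding strongly_connected_def by blast
  obtain z where "(z, u) \<in> {(a, b). E a b}" using tranclD2[OF T] by blast
  then have "E z u" by simp
  then show ?thesis unfolding pred_def by (rule someI[of "\<lambda>w. E w u"])
qed

definition fwd :: "'v \<Rightarrow> nat \<Rightarrow> 'v" where "fwd u n = (succ ^^ n) u"
definition bwd :: "'v \<Rightarrow> nat \<Rightarrow> 'v" where "bwd u n = (pred ^^ n) u"

lemma fwd_step: "E (fwd u n) (fwd u (Suc n))" unfolding fwd_def by (simp add: succ)
lemma bwd_step: "E (bwd u (Suc n)) (bwd u n)" unfolding bwd_def by (simp add: pred)
lemma fwd0[simp]: "fwd u 0 = u" unfolding fwd_def by simp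
lemma bwd0[simp]: "bwd u 0 = u" unfolding bwd_def by simp

definition embed :: "'v list \<Rightarrow> int \<Rightarrow> 'v" where
  "embed xs i = (if i < 0 then bwd (hd xs) (nat (- i))
     else if nat i < length xs then xs ! nat i else fwd (last xs) (nat i - (length xs - 1)))"

lemma embed_nth: "j < length xs \<Longrightarrow> embed xs (int j) = xs ! j"
  unfolding embed_def by simp

lemma embed_Omega:
  assumes ne: "xs \<noteq> []" and sx: "successively E xs"
  shows "embed xs \<in> Omega E"
  unfolding Omega_def
proof (intro CollectI allI)
  fix i :: int
  consider "i < -1" | "i = -1" | "i \<ge> 0 \<and> nat i + 1 < length xs" | "i \<ge> 0 \<and> nat i + 1 = length xs"
    | "i \<ge> 0 \<and> nat i \<ge> length xs" by linarith
  then show "E (embed xs i) (embed xs (i + 1))"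
  proof cases
    case 1
    then have "nat (- i) = Suc (nat (- (i + 1)))" by simp
    then show ?thesis using 1 bwd_step[of "hd xs" "nat (- (i + 1))"] unfolding embed_def by simp
  next
    case 2
    then show ?thesis using ne pred[of "hd xs"] unfolding embed_def bwd_def
      by (simp add: hd_conv_nth)
  next
    case 3
    then have "nat (i + 1) = Suc (nat i)" by (simp add: nat_add_distrib)
    then show ?thesis using 3 successively_nth[OF sx, of "nat i"] unfolding embed_def by simp
  next
    case 4
    then have a: "nat (i + 1) = Suc (nat i)" by (simp add: nat_add_distrib)
    have ni: "nat i = length xs - 1" using 4 by linarith
    have b: "xs ! nat i = last xs" using ne ni by (simp add: last_conv_nth)
    have "nat (i + 1) - (length xs - 1) = Suc 0" using 4 a by simp
    then show ?thesis using 4 a b fwd_step[of "last xs" 0] unfolding embed_def by simp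
  next
    case 5
    then have a: "nat (i + 1) = Suc (nat i)" by (simp add: nat_add_distrib)
    have "nat (i + 1) - (length xs - 1) = Suc (nat i - (length xs - 1))" using 5 a ne
      by (cases xs) auto
    then show ?thesis using 5 a fwd_step[of "last xs" "nat i - (length xs - 1)"] unfolding embed_def by simp
  qed
qed

definition window :: "(int \<Rightarrow> 'v) \<Rightarrow> int \<Rightarrow> nat \<Rightarrow> 'v list" where
  "window \<sigma> a n = map (\<lambda>j. \<sigma> (a + int j)) [0..<n]"

lemma window_succ: "\<sigma> \<in> Omega E \<Longrightarrow> successively E (window \<sigma> a n)"
  unfolding successively_conv_nth window_def
proof (intro allI impI)
  fix i assume om: "\<sigma> \<in> Omega E" and "Suc i < length (map (\<lambda>j. \<sigma> (a + int j)) [0..<n])"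
  then have i: "Suc i < n" by simp
  have "E (\<sigma> (a + int i)) (\<sigma> (a + int i + 1))" using om unfolding Omega_def by blast
  then show "E (map (\<lambda>j. \<sigma> (a + int j)) [0..<n] ! i) (map (\<lambda>j. \<sigma> (a + int j)) [0..<n] ! Suc i)"
    using i by (simp add: add_ac)
qed

lemma window_nth: "j < n \<Longrightarrow> window \<sigma> a n ! j = \<sigma> (a + int j)"
  unfolding window_def by simp

lemma window_len[simp]: "length (window \<sigma> a n) = n"
  unfolding window_def by simp

lemma periodic_Omega:
  assumes ne: "ys \<noteq> []" and sy: "successively E (ys @ [hd ys])"
  shows "(\<lambda>i. ys ! nat (i mod int (length ys))) \<in> Omega E"
  unfolding Omega_def
proof (intro CollectI allI)
  fix i :: int
  let ?L = "int (length ys)"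
  let ?r = "i mod ?L"
  have L: "?L > 0" using ne by simp
  have r: "0 \<le> ?r" "?r < ?L" using L by simp_all
  have m: "(i + 1) mod ?L = (?r + 1) mod ?L" by (simp add: mod_add_left_eq)
  show "E (ys ! nat (i mod ?L)) (ys ! nat ((i + 1) mod ?L))"
  proof (cases "?r + 1 < ?L")
    case True
    then have "(i + 1) mod ?L = ?r + 1" using m r by simp
    moreover have "nat (?r + 1) = Suc (nat ?r)" using r by simp
    moreover have "Suc (nat ?r) < length ys" using True r by (simp add: Suc_nat_eq_nat_zadd1 nat_less_iff)
    ultimately show ?thesis
      using successively_nth[OF sy, of "nat ?r"] True r by (simp add: nth_append)
  next
    case False
    then have "?r + 1 = ?L" using r by simp
    then have "(i + 1) mod ?L = 0" using m by simp
    moreover have "Suc (nat ?r) = length ys" using \<open>?r + 1 = ?L\<close> r by (simp add: Suc_nat_eq_nat_zadd1 add.commute)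
    ultimately show ?thesis
      using successively_nth[OF sy, of "nat ?r"] ne r by (simp add: nth_append hd_conv_nth)
  qed
qed

end



context G begin

lemma sens:
  assumes v: "E v w1" "E v w2" "w1 \<noteq> w2"
  shows "sensitive_dependence (Delta E h) (dist_Delta h) psi"
  unfolding sensitive_dependence_def
proof (intro exI[of _ "1/2"] conjI ballI allI impI)
  fix x B assume xX: "x \<in> Delta E h" and "\<exists>e>0. {z \<in> Delta E h. dist_Delta h x z < e} \<subseteq> B"
  then obtain e where e: "e > 0" "{z \<in> Delta E h. dist_Delta h x z < e} \<subseteq> B" by blast
  obtain \<sigma> t0 where \<sigma>: "\<sigma> \<in> Omega E" and x: "x = mk \<sigma> t0" using Delta_mk[OF xX] by blast
  obtain N where N: "CC * (1/2) ^ N < e" using small_N[OF e(1)] by blast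
  define c where "c = \<lfloor>t0 / h\<rfloor>"
  define a where "a = c - int N"
  define xs where "xs = window \<sigma> a (2 * N + 2)"
  define cs where "cs = conn (last xs) v"
  define k where "k = a + int (length xs + length cs) + 1"
  define w where "w = (if \<sigma> k = w1 then w2 else w1)"
  have w: "E v w" "w \<noteq> \<sigma> k" using v unfolding w_def by auto
  define full where "full = xs @ cs @ [v, w]"
  have xsne: "xs \<noteq> []" unfolding xs_def by (simp add: window_def)
  have sxs: "successively E xs" unfolding xs_def by (rule window_succ[OF \<sigma>])
  have s1: "successively E (xs @ cs @ [v])"
    by (rule glue2[OF sxs xsne]) (use conn[of "last xs" v] in \<open>simp add: cs_def\<close>)
  have sfull: "successively E full"
  proof -
    have "successively E ((xs @ cs @ [v]) @ [w])"
      using s1 w by (subst successively_append_iff) auto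
    then show ?thesis unfolding full_def by simp
  qed
  have fne: "full \<noteq> []" unfolding full_def by simp
  define \<sigma>' where "\<sigma>' = (\<lambda>i. embed full (i + (- a)))"
  have \<sigma>'om: "\<sigma>' \<in> Omega E" unfolding \<sigma>'_def by (rule Omega_shift[OF embed_Omega[OF fne sfull]])
  have agree: "\<sigma> i = \<sigma>' i" if "c - int N \<le> i" "i \<le> c + int N + 1" for i
  proof -
    define j where "j = nat (i - a)"
    have ij: "i + - a = int j" "j < 2 * N + 2" using that unfolding j_def a_def by auto
    have "\<sigma>' i = full ! j" unfolding \<sigma>'_def ij(1) using ij(2) xs_def full_def
      by (simp add: embed_nth)
    also have "\<dots> = xs ! j" unfolding full_def using ij(2) xs_def by (simp add: nth_append)
    also have "\<dots> = \<sigma> (a + int j)" unfolding xs_def using ij(2) by (simp add: window_nth)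
    also have "a + int j = i" using ij(1) by simp
    finally show ?thesis by simp
  qed
  have \<sigma>'k: "\<sigma>' k = w"
  proof -
    have e: "k + - a = int (length xs + length cs + 1)" unfolding k_def by simp
    have "\<sigma>' k = embed full (int (length xs + length cs + 1))" unfolding \<sigma>'_def e ..
    also have "\<dots> = full ! (length xs + length cs + 1)" by (rule embed_nth) (simp add: full_def)
    also have "\<dots> = w" unfolding full_def by (simp add: nth_append)
    finally show ?thesis .
  qed
  define y where "y = mk \<sigma>' t0"
  have yX: "y \<in> Delta E h" unfolding y_def by (rule mk_in_Delta[OF \<sigma>'om])
  have "dist_Delta h x y \<le> CC * (1/2) ^ N" unfolding x y_def
    by (rule window_agree) (use agree in \<open>auto simp: c_def\<close>)
  then have "y \<in> B" using e(2) N yX by fastforce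
  define t where "t = real_of_int k * h - t0"
  have "t0 / h < real_of_int c + 1" unfolding c_def by linarith
  moreover have "c + 1 \<le> k" unfolding k_def a_def xs_def by simp
  ultimately have "t0 / h < real_of_int k" by linarith
  then have "t0 < real_of_int k * h" using hpos by (simp add: divide_less_eq)
  then have tpos: "t > 0" unfolding t_def by simp
  have "1 \<le> dist_Delta h (psi t x) (psi t y)"
  proof (rule dist_far[OF hpos])
    fix s assume s: "0 \<le> s" "s < h"
    have "t0 + t = real_of_int k * h" unfolding t_def by simp
    then have "psi t x s = \<sigma> k" "psi t y s = \<sigma>' k"
      unfolding x y_def psi_mk by (simp_all add: mk_def floor_block[OF s])
    then show "psi t x s \<noteq> psi t y s" using w \<sigma>'k by simp
  qed
  then show "\<exists>y\<in>B \<inter> Delta E h. \<exists>t>0. 1/2 < dist_Delta h (psi t x) (psi t y)"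
    using \<open>y \<in> B\<close> yX tpos by (intro bexI[of _ y] exI[of _ t]) auto
qed (simp)

lemma periodic: "periodic_dense (Delta E h) (dist_Delta h) psi"
  unfolding periodic_dense_def
proof (intro ballI allI impI)
  fix x and e :: real assume xX: "x \<in> Delta E h" and e: "e > 0"
  obtain \<sigma> t0 where \<sigma>: "\<sigma> \<in> Omega E" and x: "x = mk \<sigma> t0" using Delta_mk[OF xX] by blast
  obtain N where N: "CC * (1/2) ^ N < e" using small_N[OF e] by blast
  define c where "c = \<lfloor>t0 / h\<rfloor>"
  define a where "a = c - int N"
  define xs where "xs = window \<sigma> a (2 * N + 2)"
  define cyc where "cyc = xs @ conn (last xs) (hd xs)"
  define L where "L = length cyc"
  have xsne: "xs \<noteq> []" unfolding xs_def by (simp add: window_def)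
  have sxs: "successively E xs" unfolding xs_def by (rule window_succ[OF \<sigma>])
  have cne: "cyc \<noteq> []" unfolding cyc_def using xsne by simp
  have hd: "hd cyc = hd xs" unfolding cyc_def using xsne by simp
  have scyc: "successively E (cyc @ [hd cyc])" unfolding cyc_def
    using glue2[OF sxs xsne conn[of "last xs" "hd xs"]] xsne by simp
  have Lge: "2 * N + 2 \<le> L" unfolding L_def cyc_def xs_def by simp
  define \<sigma>' where "\<sigma>' = (\<lambda>i. cyc ! nat ((i + - a) mod int L))"
  have \<sigma>'om: "\<sigma>' \<in> Omega E" unfolding \<sigma>'_def L_def
    by (rule Omega_shift[OF periodic_Omega[OF cne scyc]])
  have per: "\<sigma>' (i + int L) = \<sigma>' i" for i
  proof -
    have "(i + int L + - a) mod int L = (i + - a) mod int L"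
      by (metis add.commute add.left_commute mod_add_self2)
    then show ?thesis unfolding \<sigma>'_def by simp
  qed
  have agree: "\<sigma> i = \<sigma>' i" if "c - int N \<le> i" "i \<le> c + int N + 1" for i
  proof -
    define j where "j = nat (i - a)"
    have ij: "i + - a = int j" "j < 2 * N + 2" using that unfolding j_def a_def by auto
    have "(i + - a) mod int L = int j" unfolding ij(1) using ij(2) Lge by simp
    then have "\<sigma>' i = cyc ! j" unfolding \<sigma>'_def by simp
    also have "\<dots> = xs ! j" unfolding cyc_def using ij(2) xs_def by (simp add: nth_append)
    also have "\<dots> = \<sigma> (a + int j)" unfolding xs_def using ij(2) by (simp add: window_nth)
    also have "a + int j = i" using ij(1) by simp
    finally show ?thesis by simp
  qed
  define p where "p = mk \<sigma>' t0"
  have pX: "p \<in> Delta E h" unfolding p_def by (rule mk_in_Delta[OF \<sigma>'om])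
  have Lpos: "L > 0" using Lge by simp
  have "psi (real L * h) p = p"
  proof -
    have "psi (real L * h) p = mk \<sigma>' (t0 + real_of_int (int L) * h)" unfolding p_def psi_mk by simp
    also have "\<dots> = mk (\<lambda>i. \<sigma>' (i + int L)) t0" by (rule mk_shift)
    also have "\<dots> = p" unfolding per p_def ..
    finally show ?thesis .
  qed
  moreover have "real L * h > 0" using Lpos hpos by simp
  ultimately have pp: "periodic_point (Delta E h) psi p" unfolding periodic_point_def using pX by blast
  have "dist_Delta h x p \<le> CC * (1/2) ^ N" unfolding x p_def
    by (rule window_agree) (use agree in \<open>auto simp: c_def\<close>)
  then show "\<exists>p. periodic_point (Delta E h) psi p \<and> dist_Delta h x p < e"
    using pp N by (intro exI[of _ p]) auto
qed

end



context G begin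

definition word :: "nat \<Rightarrow> 'v list" where
  "word k = (let w = (from_nat (fst (prod_decode k)) :: 'v list) in
     if w \<noteq> [] \<and> successively E w then w else [undefined])"

lemma word_ok: "word k \<noteq> [] \<and> successively E (word k)"
  unfolding word_def Let_def by auto

lemma word_all: "w \<noteq> [] \<Longrightarrow> successively E w \<Longrightarrow> word (prod_encode (to_nat w, j)) = w"
  unfolding word_def Let_def by simp

fun S :: "nat \<Rightarrow> 'v list" where
  "S 0 = [undefined]"
| "S (Suc n) = S n @ conn (last (S n)) (hd (word n)) @ word n"

lemma S_ne: "S n \<noteq> []" by (induction n) auto

lemma S_succ: "successively E (S n)"
proof (induction n)
  case 0 then show ?case by simp
next
  case (Suc n)
  let ?w = "word n" and ?c = "conn (last (S n)) (hd (word n))"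
  have c: "successively E ((last (S n) # ?c) @ [hd ?w])" using conn by simp
  have w: "successively E (hd ?w # tl ?w)" using word_ok[of n] by simp
  have "successively E ((last (S n) # ?c) @ hd ?w # tl ?w)" by (rule glue[OF c w])
  then have "successively E (last (S n) # ?c @ ?w)" using word_ok[of n] by simp
  then show ?case using glue2[OF Suc.IH S_ne] by simp
qed

lemma S_len: "Suc n \<le> length (S n)"
proof (induction n)
  case 0 then show ?case by simp
next
  case (Suc n)
  have "word n \<noteq> []" using word_ok by blast
  then have "length (word n) \<ge> 1" by (cases "word n") auto
  then show ?case using Suc by simp
qed

lemma S_app: "n \<le> m \<Longrightarrow> \<exists>ys. S m = S n @ ys"
proof (induction m)
  case 0 then show ?case by simp
next
  case (Suc m)
  show ?case
  proof (cases "n = Suc m")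
    case True then show ?thesis by simp
  next
    case False
    then have "n \<le> m" using Suc.prems by simp
    then obtain ys where "S m = S n @ ys" using Suc.IH by blast
    then show ?thesis by simp
  qed
qed

lemma S_prefix: "n \<le> m \<Longrightarrow> i < length (S n) \<Longrightarrow> S m ! i = S n ! i"
  using S_app[of n m] by (auto simp: nth_append)

definition sf :: "nat \<Rightarrow> 'v" where "sf i = S i ! i"

lemma sf_S: "i < length (S n) \<Longrightarrow> sf i = S n ! i"
proof (cases "i \<le> n")
  case True
  have "i < length (S i)" using S_len[of i] by simp
  then show ?thesis unfolding sf_def using S_prefix[OF True] by simp
next
  case False
  then have "n \<le> i" by simp
  moreover assume "i < length (S n)"
  ultimately show ?thesis unfolding sf_def using S_prefix by simp
qed

lemma sf_step: "E (sf i) (sf (Suc i))"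
proof -
  have l: "Suc i < length (S (Suc i))" using S_len[of "Suc i"] by simp
  have l2: "i < length (S (Suc i))" using l by linarith
  have "sf i = S (Suc i) ! i" by (rule sf_S[OF l2])
  moreover have "sf (Suc i) = S (Suc i) ! Suc i" by (rule sf_S[OF l])
  ultimately show ?thesis using successively_nth[OF S_succ l] by simp
qed

definition su :: "int \<Rightarrow> 'v" where
  "su i = (if i < 0 then bwd (sf 0) (nat (- i)) else sf (nat i))"

lemma su_Omega: "su \<in> Omega E"
  unfolding Omega_def
proof (intro CollectI allI)
  fix i :: int
  consider "i < -1" | "i = -1" | "i \<ge> 0" by linarith
  then show "E (su i) (su (i + 1))"
  proof cases
    case 1
    then have "nat (- i) = Suc (nat (- (i + 1)))" by simp
    then show ?thesis using 1 bwd_step[of "sf 0" "nat (- (i + 1))"] unfolding su_def by simp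
  next
    case 2
    then show ?thesis using pred[of "sf 0"] unfolding su_def bwd_def by simp
  next
    case 3
    then have "nat (i + 1) = Suc (nat i)" by (simp add: nat_add_distrib)
    then show ?thesis using 3 sf_step[of "nat i"] unfolding su_def by simp
  qed
qed

lemma univ:
  assumes ne: "w \<noteq> []" and sw: "successively E w"
  shows "\<exists>p\<ge>T. \<forall>j<length w. su (int p + int j) = w ! j"
proof -
  define n where "n = prod_encode (to_nat w, T)"
  have wn: "word n = w" unfolding n_def by (rule word_all[OF ne sw])
  define c where "c = conn (last (S n)) (hd (word n))"
  define p where "p = length (S n) + length c"
  have "T \<le> n" unfolding n_def by (rule le_prod_encode_2)
  moreover have "n < length (S n)" using S_len[of n] by simp
  ultimately have Tp: "T \<le> p" unfolding p_def by simp
  have "su (int p + int j) = w ! j" if j: "j < length w" for j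
  proof -
    have "su (int p + int j) = sf (p + j)" unfolding su_def by (simp add: nat_add_distrib)
    also have "\<dots> = S (Suc n) ! (p + j)"
      using j wn by (intro sf_S) (simp add: p_def c_def)
    also have "\<dots> = w ! j" using wn unfolding p_def c_def by (simp add: nth_append)
    finally show ?thesis .
  qed
  then show ?thesis using Tp by blast
qed

lemma topo_trans: "topologically_transitive (Delta E h) (dist_Delta h) psi"
  unfolding topologically_transitive_def
proof (intro bexI[of _ "mk su 0"])
  show "mk su 0 \<in> Delta E h" by (rule mk_in_Delta[OF su_Omega])
  show "omega_limit (Delta E h) (dist_Delta h) psi (mk su 0) = Delta E h"
  proof (rule equalityI)
    show "omega_limit (Delta E h) (dist_Delta h) psi (mk su 0) \<subseteq> Delta E h"
      unfolding omega_limit_def by blast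
    show "Delta E h \<subseteq> omega_limit (Delta E h) (dist_Delta h) psi (mk su 0)"
    proof
      fix y assume yX: "y \<in> Delta E h"
      obtain \<tau> ty where \<tau>: "\<tau> \<in> Omega E" and y: "y = mk \<tau> ty" using Delta_mk[OF yX] by blast
      define c where "c = \<lfloor>ty / h\<rfloor>"
      define T where "T = (\<lambda>k::nat. nat \<lceil>(real k - ty) / h\<rceil> + nat \<bar>c\<bar> + k)"
      have "\<forall>k. \<exists>p. T k \<le> p \<and> (\<forall>j<2*k+2. su (int p + int j) = window \<tau> (c - int k) (2*k+2) ! j)"
      proof
        fix k
        have ne: "window \<tau> (c - int k) (2*k+2) \<noteq> []" by (simp add: window_def)
        show "\<exists>p. T k \<le> p \<and> (\<forall>j<2*k+2. su (int p + int j) = window \<tau> (c - int k) (2*k+2) ! j)"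
          using univ[OF ne window_succ[OF \<tau>], of "T k"] by simp
      qed
      from choice[OF this] obtain P where
        P: "\<forall>k. T k \<le> P k \<and> (\<forall>j<2*k+2. su (int (P k) + int j) = window \<tau> (c - int k) (2*k+2) ! j)"
        by blast
      define D where "D = (\<lambda>k. int (P k) - (c - int k))"
      define tk where "tk = (\<lambda>k. ty + real_of_int (D k) * h)"
      have dist: "dist_Delta h (psi (tk k) (mk su 0)) y \<le> CC * (1/2) ^ k" for k
      proof -
        have "psi (tk k) (mk su 0) = mk su (0 + tk k)" by (rule psi_mk)
        also have "\<dots> = mk (\<lambda>i. su (i + D k)) ty" unfolding tk_def by (simp add: mk_shift)
        finally have eq: "psi (tk k) (mk su 0) = mk (\<lambda>i. su (i + D k)) ty" .
        show ?thesis unfolding eq y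
        proof (rule window_agree)
          fix i assume i1: "\<lfloor>ty / h\<rfloor> - int k \<le> i" and i2: "i \<le> \<lfloor>ty / h\<rfloor> + int k + 1"
          define j where "j = nat (i - (c - int k))"
          have ij: "i = c - int k + int j" "j < 2*k+2" using i1 i2 unfolding j_def c_def by auto
          have "i + D k = int (P k) + int j" using ij(1) by (simp add: D_def)
          then have "su (i + D k) = window \<tau> (c - int k) (2*k+2) ! j" using P ij(2) by simp
          also have "\<dots> = \<tau> (c - int k + int j)" by (rule window_nth[OF ij(2)])
          finally show "su (i + D k) = \<tau> i" using ij(1) by simp
        qed
      qed
      have tk_ge: "real k \<le> tk k" for k
      proof -
        let ?q = "(real k - ty) / h"
        have a: "int (T k) = int (nat \<lceil>?q\<rceil>) + int (nat \<bar>c\<bar>) + int k" by (simp add: T_def)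
        have b: "\<lceil>?q\<rceil> \<le> int (nat \<lceil>?q\<rceil>)" by simp
        have cc: "int (nat \<bar>c\<bar>) = \<bar>c\<bar>" by simp
        have d: "int (T k) \<le> int (P k)" using P by simp
        have "\<lceil>?q\<rceil> \<le> D k" unfolding D_def using a b cc d abs_ge_self[of c] by linarith
        then have "?q \<le> real_of_int (D k)" using le_of_int_ceiling[of ?q] by linarith
        then have "real k - ty \<le> real_of_int (D k) * h" using hpos by (simp add: pos_divide_le_eq)
        then show ?thesis unfolding tk_def by simp
      qed
      have lim: "filterlim tk at_top sequentially"
        by (rule filterlim_at_top_mono[OF filterlim_real_sequentially]) (use tk_ge in auto)
      have "(\<lambda>k. dist_Delta h (psi (tk k) (mk su 0)) y) \<longlonglongrightarrow> 0"
      proof (rule tendsto_sandwich[of "\<lambda>_. 0" _ _ "\<lambda>k. CC * (1/2) ^ k"])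
        show "eventually (\<lambda>k. 0 \<le> dist_Delta h (psi (tk k) (mk su 0)) y) sequentially"
          by (intro always_eventually allI dist_nonneg[OF hpos])
        show "eventually (\<lambda>k. dist_Delta h (psi (tk k) (mk su 0)) y \<le> CC * (1/2) ^ k) sequentially"
          by (intro always_eventually allI dist)
        show "(\<lambda>_. 0::real) \<longlonglongrightarrow> 0" by simp
        show "(\<lambda>k. CC * (1/2::real) ^ k) \<longlonglongrightarrow> 0"
          by (intro tendsto_mult_right_zero LIMSEQ_power_zero) simp
      qed
      then show "y \<in> omega_limit (Delta E h) (dist_Delta h) psi (mk su 0)"
        unfolding omega_limit_def using yX lim by blast
    qed
  qed
qed

end

theorem mainTheorem12:
  fixes E :: "'v::finite \<Rightarrow> 'v \<Rightarrow> bool" and h :: real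
  assumes "h > 0"
    and "strongly_connected E"
    and "\<exists>v. out_degree E v > 1"
  shows "chaotic_flow (Delta E h) (dist_Delta h) psi"
proof -
  interpret G E h by unfold_locales (use assms in auto)
  obtain v where v: "out_degree E v > 1" using assms(3) by blast
  have fin: "finite {w. E v w}" by simp
  have "\<not> card {w. E v w} \<le> Suc 0" using v unfolding out_degree_def by simp
  then obtain w1 w2 where "E v w1" "E v w2" "w1 \<noteq> w2"
    using card_le_Suc0_iff_eq[OF fin] by auto
  then show ?thesis unfolding chaotic_flow_def using sens periodic topo_trans by blast
qed


end
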